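(* Let $f:X\to Y$ be a function and $(Y,\preceq)$ a WQO, and define $x\preceq_f x'$ iff $f(x)\preceq f(x')$. Then $I\subseteq X$ is an ideal of $(X,\preceq_f)$ if and only if $I=f^{-1}(J)$ for some ideal $J$ of $(Y,\preceq)$ such that $\downarrow_\preceq f(f^{-1}(J))=J$.
   Context: For a quasi-order $\preceq$ on $Y$, $\downarrow_\preceq S=\{y\mid\exists s\in S: y\preceq s\}$. An ideal of a WQO is a nonempty subset that is downward closed and directed (any two elements have a common upper bound in the set). *)

theory Defs
  imports Main
begin

definition quasi_order :: "('b \<Rightarrow> 'b \<Rightarrow> bool) \<Rightarrow> bool" where
  "quasi_order le \<longleftrightarrow> (\<forall>x. le x x) \<and> (\<forall>x y z. le x y \<longrightarrow> le y z \<longrightarrow> le x z)"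

definition wqo :: "('b \<Rightarrow> 'b \<Rightarrow> bool) \<Rightarrow> bool" where
  "wqo le \<longleftrightarrow> quasi_order le \<and> (\<forall>s :: nat \<Rightarrow> 'b. \<exists>i j. i < j \<and> le (s i) (s j))"

definition down_closure :: "('b \<Rightarrow> 'b \<Rightarrow> bool) \<Rightarrow> 'b set \<Rightarrow> 'b set" where
  "down_closure le S = {y. \<exists>s\<in>S. le y s}"

definition is_ideal :: "('b \<Rightarrow> 'b \<Rightarrow> bool) \<Rightarrow> 'b set \<Rightarrow> bool" where
  "is_ideal le I \<longleftrightarrow> I \<noteq> {}
     \<and> (\<forall>x y. y \<in> I \<longrightarrow> le x y \<longrightarrow> x \<in> I)
     \<and> (\<forall>x\<in>I. \<forall>y\<in>I. \<exists>z\<in>I. le x z \<and> le y z)"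

end

theory Submission
  imports Defs
begin

theorem mainTheorem8:
  fixes f :: "'a \<Rightarrow> 'b" and le :: "'b \<Rightarrow> 'b \<Rightarrow> bool" and I :: "'a set"
  assumes "wqo le"
  shows "is_ideal (\<lambda>x x'. le (f x) (f x')) I \<longleftrightarrow>
         (\<exists>J. is_ideal le J \<and> I = f -` J \<and> down_closure le (f ` (f -` J)) = J)"
proof
  have refl: "\<And>x. le x x" and trans: "\<And>x y z. le x y \<Longrightarrow> le y z \<Longrightarrow> le x z"
    using assms unfolding wqo_def quasi_order_def by blast+
  note refl trans
  assume H: "is_ideal (\<lambda>x x'. le (f x) (f x')) I"
  define J where "J = down_closure le (f ` I)"
  have ne: "I \<noteq> {}" and dc: "\<And>x y. y \<in> I \<Longrightarrow> le (f x) (f y) \<Longrightarrow> x \<in> I"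
    and dir: "\<And>x y. x \<in> I \<Longrightarrow> y \<in> I \<Longrightarrow> \<exists>z\<in>I. le (f x) (f z) \<and> le (f y) (f z)"
    using H unfolding is_ideal_def by blast+
  have IJ: "I = f -` J"
  proof
    show "I \<subseteq> f -` J" using refl unfolding J_def down_closure_def by blast
    show "f -` J \<subseteq> I" using dc unfolding J_def down_closure_def by blast
  qed
  have idl: "is_ideal le J"
    unfolding is_ideal_def
  proof (intro conjI allI impI ballI)
    show "J \<noteq> {}" using ne refl unfolding J_def down_closure_def by blast
  next
    fix x y assume "y \<in> J" "le x y" thus "x \<in> J"
      using trans unfolding J_def down_closure_def by blast
  next
    fix x y assume "x \<in> J" "y \<in> J"
    then obtain a b where a: "a \<in> I" "le x (f a)" and b: "b \<in> I" "le y (f b)"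
      unfolding J_def down_closure_def by blast
    obtain c where c: "c \<in> I" "le (f a) (f c)" "le (f b) (f c)" using dir[OF a(1) b(1)] by blast
    have "f c \<in> J" using c(1) refl unfolding J_def down_closure_def by blast
    thus "\<exists>z\<in>J. le x z \<and> le y z" using trans a b c by blast
  qed
  have "down_closure le (f ` (f -` J)) = J" using IJ J_def by simp
  thus "\<exists>J. is_ideal le J \<and> I = f -` J \<and> down_closure le (f ` (f -` J)) = J"
    using idl IJ by blast
next
  have refl: "\<And>x. le x x" and trans: "\<And>x y z. le x y \<Longrightarrow> le y z \<Longrightarrow> le x z"
    using assms unfolding wqo_def quasi_order_def by blast+
  assume "\<exists>J. is_ideal le J \<and> I = f -` J \<and> down_closure le (f ` (f -` J)) = J"
  then obtain J where J: "is_ideal le J" and IJ: "I = f -` J"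
    and D: "down_closure le (f ` (f -` J)) = J" by blast
  have ne: "J \<noteq> {}" and dc: "\<And>x y. y \<in> J \<Longrightarrow> le x y \<Longrightarrow> x \<in> J"
    and dir: "\<And>x y. x \<in> J \<Longrightarrow> y \<in> J \<Longrightarrow> \<exists>z\<in>J. le x z \<and> le y z"
    using J unfolding is_ideal_def by blast+
  have D': "\<And>z. z \<in> J \<Longrightarrow> \<exists>w. f w \<in> J \<and> le z (f w)"
    using D unfolding down_closure_def by blast
  show "is_ideal (\<lambda>x x'. le (f x) (f x')) I"
    unfolding is_ideal_def
  proof (intro conjI allI impI ballI)
    obtain z where "z \<in> J" using ne by blast
    then obtain w where "f w \<in> J" using D' by blast
    thus "I \<noteq> {}" using IJ by blast
  next
    fix x y assume "y \<in> I" "le (f x) (f y)" thus "x \<in> I" using IJ dc by blast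
  next
    fix x y assume "x \<in> I" "y \<in> I"
    then obtain z where z: "z \<in> J" "le (f x) z" "le (f y) z" using dir IJ by blast
    then obtain w where "f w \<in> J" "le z (f w)" using D' by blast
    thus "\<exists>z\<in>I. le (f x) (f z) \<and> le (f y) (f z)" using IJ z trans by blast
  qed
qed

end
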